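(* For any $\mathcal{H}\subseteq\{0,1\}^{\mathcal{X}}$, there exists a deterministic online learner which, under apple tasting feedback, makes at most $\operatorname{AL}_1(\mathcal{H})$ mistakes on any sequence $(x_1,y_1),\dots,(x_T,y_T)$ realizable by $\mathcal{H}$ (i.e. $y_t=h(x_t)$ for all $t$ for some $h\in\mathcal{H}$).
   Context: Apple tasting feedback: in each round the learner receives $x_t\in\mathcal{X}$, predicts $\hat y_t\in\{0,1\}$, and observes the true label $y_t$ only if $\hat y_t=1$; a mistake is a round with $\hat y_t\ne y_t$. AL tree of width $w\in\mathbb{N}$ and depth $d$: a binary string $u$ is an internal node if $|u|<d$ and $u$ has fewer than $w$ ones; the tree assigns $x_u\in\mathcal{X}$ to each internal node. A path is a binary string $\sigma$ whose proper prefixes are all internal nodes but which is not itself one. The tree is shattered by $\mathcal{H}$ if for every path $\sigma$ some $h\in\mathcal{H}$ satisfies $h(x_{(\sigma_1,\dots,\sigma_{i-1})})=\sigma_i$ for all $i\le|\sigma|$. $\operatorname{AL}_w(\mathcal{H})$ is the largest $d$ such that such a tree of width $w$ and depth $d$ is shattered ($\infty$ if unbounded, $0$ if none). (For $w=1$: internal nodes are the strings $0^k$, $k<d$, and paths are $0^d$ and $0^k1$ for $k<d$.) *)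

theory Defs
  imports Main "HOL-Library.Extended_Nat"
begin

text \<open>Nodes are binary strings (bool lists, True = 1). A tree of width w
and depth d assigns an instance to each internal node; we model it as a total
function on bool lists, only its values on internal nodes matter.\<close>

definition al_internal :: "nat \<Rightarrow> nat \<Rightarrow> bool list \<Rightarrow> bool" where
  "al_internal w d u \<longleftrightarrow> length u < d \<and> length (filter id u) < w"

definition al_path :: "nat \<Rightarrow> nat \<Rightarrow> bool list \<Rightarrow> bool" where
  "al_path w d \<sigma> \<longleftrightarrow> (\<forall>i < length \<sigma>. al_internal w d (take i \<sigma>)) \<and> \<not> al_internal w d \<sigma>"

definition al_shattered :: "('x \<Rightarrow> bool) set \<Rightarrow> nat \<Rightarrow> nat \<Rightarrow> (bool list \<Rightarrow> 'x) \<Rightarrow> bool" where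
  "al_shattered H w d tr \<longleftrightarrow>
     (\<forall>\<sigma>. al_path w d \<sigma> \<longrightarrow> (\<exists>h\<in>H. \<forall>i < length \<sigma>. h (tr (take i \<sigma>)) = \<sigma> ! i))"

text \<open>AL_w(H): supremum of shattered depths (Sup of the empty set is 0, unbounded gives \<infinity>).\<close>
definition AL :: "nat \<Rightarrow> ('x \<Rightarrow> bool) set \<Rightarrow> enat" where
  "AL w H = Sup {enat d | d. \<exists>tr. al_shattered H w d tr}"

text \<open>The history records, for each past round, the instance and
the observed label: Some y if the learner predicted 1 (True), None otherwise.\<close>
type_synonym 'x at_learner = "('x \<times> bool option) list \<Rightarrow> 'x \<Rightarrow> bool"

fun at_mistakes :: "'x at_learner \<Rightarrow> ('x \<times> bool option) list \<Rightarrow> ('x \<times> bool) list \<Rightarrow> nat" where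
  "at_mistakes L hist [] = 0"
| "at_mistakes L hist ((x, y) # rest) =
     (let p = L hist x in
       (if p \<noteq> y then 1 else 0) + at_mistakes L (hist @ [(x, if p then Some y else None)]) rest)"

definition realizable :: "('x \<Rightarrow> bool) set \<Rightarrow> ('x \<times> bool) list \<Rightarrow> bool" where
  "realizable H S \<longleftrightarrow> (\<exists>h\<in>H. \<forall>(x, y) \<in> set S. y = h x)"

end

theory Submission
  imports Defs
begin

definition VS :: "('x \<Rightarrow> bool) set \<Rightarrow> ('x \<times> bool option) list \<Rightarrow> ('x \<Rightarrow> bool) set" where
  "VS H hist = {h\<in>H. \<forall>(x, oy) \<in> set hist. \<forall>y. oy = Some y \<longrightarrow> h x = y}"

definition LL :: "('x \<Rightarrow> bool) set \<Rightarrow> 'x at_learner" where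
  "LL H hist x = (\<exists>h\<in>VS H hist. h x)"

lemma VS_snoc: "VS H (hist @ [(x, oy)]) = {h\<in>VS H hist. \<forall>y. oy = Some y \<longrightarrow> h x = y}"
  unfolding VS_def by auto

lemma VS_snoc_sub: "VS H (hist @ [(x, oy)]) \<subseteq> VS H hist"
  by (auto simp: VS_snoc)

lemma key:
  assumes "hs \<in> VS H hist" "\<forall>(x, y) \<in> set S. y = hs x"
  shows "\<exists>xs. length xs = at_mistakes (LL H) hist S \<and> (\<forall>j<length xs. \<not> hs (xs!j)) \<and>
     (\<forall>k<length xs. \<exists>h\<in>VS H hist. (\<forall>j<k. \<not> h (xs!j)) \<and> h (xs!k))"
  using assms
proof (induction S arbitrary: hist)
  case Nil
  then show ?case by auto
next
  case (Cons a rest)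
  obtain x y where a: "a = (x, y)" by fastforce
  have y: "y = hs x" using Cons.prems a by auto
  have rest: "\<forall>(x, y) \<in> set rest. y = hs x" using Cons.prems by auto
  let ?p = "LL H hist x"
  let ?h' = "hist @ [(x, if ?p then Some y else None)]"
  have am: "at_mistakes (LL H) hist (a # rest) = (if ?p \<noteq> y then 1 else 0) + at_mistakes (LL H) ?h' rest"
    using a by (simp add: Let_def)
  have "hs \<in> VS H ?h'" using Cons.prems(1) y by (simp add: VS_snoc)
  from Cons.IH[OF this rest] obtain xs where xs:
    "length xs = at_mistakes (LL H) ?h' rest" "(\<forall>j<length xs. \<not> hs (xs!j))"
    "(\<forall>k<length xs. \<exists>h\<in>VS H ?h'. (\<forall>j<k. \<not> h (xs!j)) \<and> h (xs!k))" by blast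
  have sub: "VS H ?h' \<subseteq> VS H hist" by (rule VS_snoc_sub)
  show ?case
  proof (cases "?p \<noteq> y")
    case False
    then have "length xs = at_mistakes (LL H) hist (a # rest)" using am xs(1) by simp
    moreover have "\<forall>k<length xs. \<exists>h\<in>VS H hist. (\<forall>j<k. \<not> h (xs!j)) \<and> h (xs!k)"
      using xs(3) sub by blast
    ultimately show ?thesis using xs(2) by blast
  next
    case True
    have p: ?p
    proof (rule ccontr)
      assume "\<not> ?p"
      then have "\<not> hs x" using Cons.prems(1) unfolding LL_def by blast
      then show False using True y \<open>\<not> ?p\<close> by simp
    qed
    have yF: "y = False" using True p by simp
    have VSx: "\<And>h. h \<in> VS H ?h' \<Longrightarrow> \<not> h x" using p yF by (auto simp: VS_snoc)
    show ?thesis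
    proof (rule exI[of _ "x # xs"], intro conjI allI impI)
      show "length (x # xs) = at_mistakes (LL H) hist (a # rest)"
        using xs(1) am True by simp
      fix j assume "j < length (x # xs)"
      then show "\<not> hs ((x # xs) ! j)" using xs(2) y yF by (cases j) auto
    next
      fix k assume k: "k < length (x # xs)"
      show "\<exists>h\<in>VS H hist. (\<forall>j<k. \<not> h ((x # xs) ! j)) \<and> h ((x # xs) ! k)"
      proof (cases k)
        case 0
        then show ?thesis using p unfolding LL_def by auto
      next
        case (Suc k')
        then have "k' < length xs" using k by simp
        then obtain h where h: "h \<in> VS H ?h'" "\<forall>j<k'. \<not> h (xs!j)" "h (xs!k')"
          using xs(3) by blast
        have "\<forall>j<k. \<not> h ((x # xs) ! j)"
        proof (intro allI impI)
          fix j assume "j < k" then show "\<not> h ((x # xs) ! j)"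
            using h VSx Suc by (cases j) auto
        qed
        then show ?thesis using h Suc sub by auto
      qed
    qed
  qed
qed

lemma shatter:
  assumes "hs \<in> H" "\<forall>j<length xs. \<not> hs (xs!j)"
    "\<forall>k<length xs. \<exists>h\<in>H. (\<forall>j<k. \<not> h (xs!j)) \<and> h (xs!k)"
  shows "al_shattered H 1 (length xs) (\<lambda>u. xs ! length u)"
  unfolding al_shattered_def
proof (intro allI impI)
  fix \<sigma> assume P: "al_path 1 (length xs) \<sigma>"
  let ?m = "length xs"
  let ?n = "length \<sigma>"
  show "\<exists>h\<in>H. \<forall>i<length \<sigma>. h (xs ! length (take i \<sigma>)) = \<sigma> ! i"
  proof (cases "?n = 0")
    case True
    then show ?thesis using assms(1) by auto
  next
    case False
    have int: "al_internal 1 ?m (take (?n - 1) \<sigma>)" using P False unfolding al_path_def by auto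
    hence nm: "?n - 1 < ?m" and nt: "True \<notin> set (take (?n - 1) \<sigma>)"
      unfolding al_internal_def using False by (auto simp: filter_empty_conv)
    have pre: "\<forall>i < ?n - 1. \<sigma> ! i = False"
    proof (intro allI impI)
      fix i assume "i < ?n - 1"
      then have "take (?n - 1) \<sigma> ! i = \<sigma> ! i" "i < length (take (?n - 1) \<sigma>)" by auto
      then show "\<sigma> ! i = False" using nt by (metis nth_mem)
    qed
    show ?thesis
    proof (cases "\<sigma> ! (?n - 1)")
      case True
      obtain h where h: "h \<in> H" "\<forall>j<?n - 1. \<not> h (xs!j)" "h (xs!(?n - 1))"
        using assms(3) nm by blast
      have "\<forall>i<?n. h (xs ! length (take i \<sigma>)) = \<sigma> ! i"
      proof (intro allI impI)
        fix i assume i: "i < ?n"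
        show "h (xs ! length (take i \<sigma>)) = \<sigma> ! i"
        proof (cases "i = ?n - 1")
          case True then show ?thesis using h \<open>\<sigma> ! (?n - 1)\<close> i by auto
        next
          case False then show ?thesis using h pre i by auto
        qed
      qed
      then show ?thesis using h by blast
    next
      case F: False
      have all: "\<forall>i < ?n. \<sigma> ! i = False" using pre F
        by (metis One_nat_def Suc_pred' \<open>?n \<noteq> 0\<close> less_Suc_eq not_gr_zero)
      hence "True \<notin> set \<sigma>" by (metis in_set_conv_nth)
      hence "length (filter id \<sigma>) = 0" by (auto simp: filter_empty_conv)
      hence "?n \<ge> ?m" using P unfolding al_path_def al_internal_def by auto
      hence nn: "?n = ?m" using nm by auto
      have "\<forall>i<?n. hs (xs ! length (take i \<sigma>)) = \<sigma> ! i"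
        using all assms(2) nn by auto
      then show ?thesis using assms(1) by blast
    qed
  qed
qed

theorem theorem4:
  fixes H :: "('x \<Rightarrow> bool) set"
  shows "\<exists>L :: 'x at_learner. \<forall>S. realizable H S \<longrightarrow> enat (at_mistakes L [] S) \<le> AL 1 H"
proof (intro exI[of _ "LL H"] allI impI)
  fix S assume "realizable H S"
  then obtain hs where hs: "hs \<in> H" "\<forall>(x, y) \<in> set S. y = hs x"
    unfolding realizable_def by blast
  have v: "VS H [] = H" unfolding VS_def by auto
  have "hs \<in> VS H []" using hs v by simp
  from key[OF this hs(2)] obtain xs where xs: "length xs = at_mistakes (LL H) [] S"
    "\<forall>j<length xs. \<not> hs (xs!j)"
    "\<forall>k<length xs. \<exists>h\<in>H. (\<forall>j<k. \<not> h (xs!j)) \<and> h (xs!k)" using v by auto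
  have "al_shattered H 1 (length xs) (\<lambda>u. xs ! length u)" using shatter[OF hs(1) xs(2,3)] .
  hence "enat (length xs) \<in> {enat d | d. \<exists>tr. al_shattered H 1 d tr}" by blast
  hence "enat (length xs) \<le> AL 1 H" unfolding AL_def by (rule Sup_upper)
  then show "enat (at_mistakes (LL H) [] S) \<le> AL 1 H" using xs(1) by simp
qed

end
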